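(* Let $A$ be a finite alphabet, $n\ge1$, and $L\subseteq(A^\ast)^n$ a regular $n$-variable language. There is a positive integer $p$ such that for every $(w_1,\ldots,w_n)\in L$ with $N:=\max_i|w_i|\ge p$ the following holds. Let $w_i^\$=w_i\$^{N-|w_i|}$ (so each $w_i^\$$ has length $N$). Then there are integers $k\ge1$ and $l\ge 0$ with $k+l\le N$ such that, writing each $w_i^\$=u_im_iv_i$ where $m_i$ consists of the $k$-th through $(k+l)$-th letters of $w_i^\$$, for all $r\ge1$ the tuple $(u_1m_1^rv_1,\ldots,u_nm_n^rv_n)$, read as a word over the padded alphabet, lies in $L^\$$ (i.e. deleting the $\$$ symbols yields an element of $L$). Moreover, each $m_i$ consists either entirely of letters of $A$ or entirely of $\$$ symbols.
   Context: $A^\ast$ is the set of finite words over $A$, $\$$ a new padding symbol, $A^\$=(A\sqcup\{\$\})^n\setminus\{(\$,\ldots,\$)\}$ the padded alphabet. For $(w_1,\ldots,w_n)\in(A^\ast)^n$ with $N=\max|w_i|$, its padded string is the word $\overline\sigma_1\cdots\overline\sigma_N$ over $A^\$$ where $\overline\sigma_j$ is the $n$-tuple of $j$-th letters of the $w_i$, using $\$$ when $j>|w_i|$. $L^\$$ is the set of padded strings of elements of $L$. $L$ is regular ($n$-tape regular) if $L^\$$ is accepted by a deterministic finite state automaton over $A^\$$. *)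

theory Defs
  imports Main
begin

text \<open>Words are lists; an n-tuple of words is a list of n words.
  The padding symbol is None; a letter a of A is Some a.\<close>

definition padded_alphabet :: "'a set \<Rightarrow> nat \<Rightarrow> 'a option list set" where
  "padded_alphabet A n =
     {\<sigma>. length \<sigma> = n \<and> set \<sigma> \<subseteq> Some ` A \<union> {None} \<and> \<sigma> \<noteq> replicate n None}"

definition maxlen :: "'a list list \<Rightarrow> nat" where
  "maxlen ws = Max (insert 0 (set (map length ws)))"

definition pad_word :: "nat \<Rightarrow> 'a list \<Rightarrow> 'a option list" where
  "pad_word N w = map Some w @ replicate (N - length w) None"

text \<open>Reading a tuple of (equal length M) words over A \<union> {\$} as a word over
  the padded alphabet: the j-th letter is the tuple of the j-th letters.\<close>
definition columns :: "nat \<Rightarrow> 'a option list list \<Rightarrow> 'a option list list" where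
  "columns M ys = map (\<lambda>j. map (\<lambda>y. y ! j) ys) [0..<M]"

definition padded_string :: "'a list list \<Rightarrow> 'a option list list" where
  "padded_string ws = columns (maxlen ws) (map (pad_word (maxlen ws)) ws)"

definition padded_lang :: "'a list list set \<Rightarrow> 'a option list list set" where
  "padded_lang L = padded_string ` L"

definition dfa_accepted :: "'b set \<Rightarrow> 'b list set \<Rightarrow> bool" where
  "dfa_accepted \<Sigma> K \<longleftrightarrow>
     (\<exists>(Q::nat set) q0 (\<delta>::nat \<Rightarrow> 'b \<Rightarrow> nat) F.
        finite Q \<and> q0 \<in> Q \<and> (\<forall>q\<in>Q. \<forall>\<sigma>\<in>\<Sigma>. \<delta> q \<sigma> \<in> Q) \<and> F \<subseteq> Q \<and>
        K = {x. set x \<subseteq> \<Sigma> \<and> fold (\<lambda>\<sigma> q. \<delta> q \<sigma>) x q0 \<in> F})"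

definition regular_ntape :: "'a set \<Rightarrow> nat \<Rightarrow> 'a list list set \<Rightarrow> bool" where
  "regular_ntape A n L \<longleftrightarrow> dfa_accepted (padded_alphabet A n) (padded_lang L)"

end

theory Submission
  imports Defs
begin

lemma nth_concat_replicate:
  "t < r * length m \<Longrightarrow> concat (replicate r m) ! t = m ! (t mod length m)"
proof (induction r arbitrary: t)
  case 0 then show ?case by simp
next
  case (Suc r)
  show ?case
  proof (cases "t < length m")
    case True then show ?thesis by (simp add: nth_append)
  next
    case False
    then have "t - length m < r * length m" using Suc.prems by simp
    then have "concat (replicate r m) ! (t - length m) = m ! ((t - length m) mod length m)"
      using Suc.IH by blast
    moreover have "(t - length m) mod length m = t mod length m"
      using False by (simp add: le_mod_geq)
    ultimately show ?thesis using False by (simp add: nth_append)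
  qed
qed

definition gidx :: "nat \<Rightarrow> nat \<Rightarrow> nat \<Rightarrow> nat \<Rightarrow> nat" where
  "gidx i j r t = (if t < i then t else if t < i + r * (j - i) then i + (t - i) mod (j - i)
                   else t - (r - 1) * (j - i))"

lemma pump_len:
  assumes "i < j" "j \<le> length y" "r \<ge> 1"
  shows "length (take i y @ concat (replicate r (drop i (take j y))) @ drop j y)
         = length y + (r - 1) * (j - i)"
proof -
  obtain r' where r: "r = Suc r'" using assms(3) by (cases r) auto
  obtain d where d: "j = i + d" using assms(1) le_Suc_ex less_imp_le by blast
  obtain e where e: "length y = j + e" using assms(2) le_Suc_ex by blast
  show ?thesis using assms by (simp add: r d e length_concat sum_list_replicate algebra_simps)
qed

lemma pump_nth:
  assumes "i < j" "j \<le> length y" "r \<ge> 1" "t < length y + (r - 1) * (j - i)"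
  shows "(take i y @ concat (replicate r (drop i (take j y))) @ drop j y) ! t = y ! (gidx i j r t)
         \<and> gidx i j r t < length y"
proof -
  obtain r' where r: "r = Suc r'" using assms(3) by (cases r) auto
  obtain d where d: "j = i + d" using assms(1) le_Suc_ex less_imp_le by blast
  obtain e where e: "length y = j + e" using assms(2) le_Suc_ex by blast
  have d0: "d > 0" using assms(1) d by simp
  have lm: "length (drop i (take j y)) = d" using assms d by simp
  have lc: "length (concat (replicate r (drop i (take j y)))) = r * d"
    using lm by (simp add: length_concat sum_list_replicate)
  have lt: "length (take i y) = i" using assms by simp
  show ?thesis
  proof (cases "t < i")
    case True then show ?thesis using assms by (simp add: nth_append gidx_def)
  next
    case F1: False
    show ?thesis
    proof (cases "t < i + r * d")
      case True
      then have tt: "t - i < r * d" using F1 by simp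
      then have "concat (replicate r (drop i (take j y))) ! (t - i)
            = drop i (take j y) ! ((t - i) mod d)" using nth_concat_replicate lm by metis
      moreover have md: "(t - i) mod d < d" using d0 by simp
      moreover have "drop i (take j y) ! ((t - i) mod d) = y ! (i + (t - i) mod d)"
        using md assms d by simp
      ultimately have "(take i y @ concat (replicate r (drop i (take j y))) @ drop j y) ! t
          = y ! (i + (t - i) mod d)" using F1 tt lt lc by (simp add: nth_append)
      then show ?thesis using F1 True md d e by (simp add: gidx_def)
    next
      case False
      have "(take i y @ concat (replicate r (drop i (take j y))) @ drop j y) ! t
          = drop j y ! (t - i - r * d)" using F1 False lt lc by (simp add: nth_append)
      also have "\<dots> = y ! (j + (t - i - r * d))"
        using assms(4) False r d e by simp
      also have "j + (t - i - r * d) = t - r' * d" using False F1 d r by simp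
      finally show ?thesis using F1 False d e r assms(4) by (simp add: gidx_def)
    qed
  qed
qed

lemma columns_pump:
  assumes "\<forall>y\<in>set ys. length y = N" "i < j" "j \<le> N" "r \<ge> 1"
  shows "columns (N + (r - 1) * (j - i))
           (map (\<lambda>y. take i y @ concat (replicate r (drop i (take j y))) @ drop j y) ys)
         = (let c = columns N ys in take i c @ concat (replicate r (drop i (take j c))) @ drop j c)"
proof -
  define c where "c = columns N ys"
  have lc: "length c = N" by (simp add: c_def columns_def)
  show ?thesis unfolding Let_def c_def[symmetric]
  proof (rule nth_equalityI)
    show "length (columns (N + (r - 1) * (j - i))
           (map (\<lambda>y. take i y @ concat (replicate r (drop i (take j y))) @ drop j y) ys)) =
          length (take i c @ concat (replicate r (drop i (take j c))) @ drop j c)"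
      using pump_len[of i j c r] assms lc by (simp add: columns_def)
  next
    fix t assume "t < length (columns (N + (r - 1) * (j - i))
           (map (\<lambda>y. take i y @ concat (replicate r (drop i (take j y))) @ drop j y) ys))"
    then have t: "t < N + (r - 1) * (j - i)" by (simp add: columns_def)
    have pc: "(take i c @ concat (replicate r (drop i (take j c))) @ drop j c) ! t = c ! (gidx i j r t)"
      and gl: "gidx i j r t < N"
      using pump_nth[of i j c r t] assms lc t by auto
    have py: "(take i y @ concat (replicate r (drop i (take j y))) @ drop j y) ! t = y ! (gidx i j r t)"
      if yy: "y \<in> set ys" for y
    proof -
      have "length y = N" using yy assms(1) by blast
      then show ?thesis using pump_nth[of i j y r t] assms t by simp
    qed
    show "columns (N + (r - 1) * (j - i))
           (map (\<lambda>y. take i y @ concat (replicate r (drop i (take j y))) @ drop j y) ys) ! t =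
          (take i c @ concat (replicate r (drop i (take j c))) @ drop j c) ! t"
      using t gl py unfolding pc by (simp add: columns_def c_def)
  qed
qed

lemma gap:
  fixes B :: "nat set"
  assumes "finite B" "lo + (card B + 1) * m \<le> hi"
  shows "\<exists>a. lo \<le> a \<and> a + m \<le> hi \<and> (\<forall>b\<in>B. \<not> (a < b \<and> b < a + m))"
  using assms
proof (induction "card B" arbitrary: B lo rule: less_induct)
  case less
  have hm: "lo + m \<le> hi" using less.prems(2) by (metis add_leD1 distrib_right mult_1 add.assoc add.commute)
  show ?case
  proof (cases "\<exists>b\<in>B. lo < b \<and> b < lo + m")
    case False then show ?thesis using hm by blast
  next
    case True
    then obtain b where b: "b \<in> B" "lo < b" "b < lo + m" by auto
    have "card B > 0" using b less.prems card_gt_0_iff by blast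
    then have c: "card (B - {b}) < card B" "card B = card (B - {b}) + 1"
      using b less.prems by (auto simp: card_Diff_singleton)
    define c' where "c' = card (B - {b})"
    have "lo + (c' + 1 + 1) * m \<le> hi" using less.prems(2) c(2) unfolding c'_def by simp
    then have "lo + m + (c' + 1) * m \<le> hi" by (simp add: algebra_simps)
    then have "b + (card (B - {b}) + 1) * m \<le> hi" using b(3) unfolding c'_def by linarith
    then have "\<exists>a. b \<le> a \<and> a + m \<le> hi \<and> (\<forall>b'\<in>B - {b}. \<not> (a < b' \<and> b' < a + m))"
      using c(1) less.prems(1) by (intro less.hyps) auto
    then obtain a where a: "b \<le> a" "a + m \<le> hi" "\<forall>b'\<in>B - {b}. \<not> (a < b' \<and> b' < a + m)"
      by blast
    show ?thesis using a b by (intro exI[of _ a]) auto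
  qed
qed

lemma foldQ:
  assumes "\<forall>q\<in>Q. \<forall>\<sigma>\<in>S. \<delta> q \<sigma> \<in> Q"
  shows "set xs \<subseteq> S \<Longrightarrow> q \<in> Q \<Longrightarrow> fold (\<lambda>\<sigma> q. \<delta> q \<sigma>) xs q \<in> Q"
  using assms by (induction xs arbitrary: q) auto

lemma fold_rep:
  "fold f m q = q \<Longrightarrow> fold f (concat (replicate r m)) q = q"
  by (induction r) auto

lemma pad_nth:
  "u < N \<Longrightarrow> length w \<le> N \<Longrightarrow>
   pad_word N w ! u = (if u < length w then Some (w ! u) else None)"
  by (auto simp: pad_word_def nth_append)

lemma dfa_obtain:
  assumes "dfa_accepted S K"
  obtains Q :: "nat set" and q0 :: nat and \<delta> :: "nat \<Rightarrow> 'b \<Rightarrow> nat" and F where "finite Q" "q0 \<in> Q" "\<forall>q\<in>Q. \<forall>\<sigma>\<in>S. \<delta> q \<sigma> \<in> Q" "F \<subseteq> Q"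
    "K = {x. set x \<subseteq> S \<and> fold (\<lambda>\<sigma> q. \<delta> q \<sigma>) x q0 \<in> F}"
  using assms unfolding dfa_accepted_def by blast

theorem mainTheorem8:
  fixes A :: "'a set" and n :: nat and L :: "'a list list set"
  assumes "finite A" and "n \<ge> 1"
    and "\<forall>ws\<in>L. length ws = n \<and> (\<forall>w\<in>set ws. set w \<subseteq> A)"
    and "regular_ntape A n L"
  shows "\<exists>p::nat. p > 0 \<and>
    (\<forall>ws\<in>L. maxlen ws \<ge> p \<longrightarrow>
      (let N = maxlen ws; wp = map (pad_word N) ws in
       \<exists>k l::nat. k \<ge> 1 \<and> k + l \<le> N \<and>
         (\<forall>r::nat. r \<ge> 1 \<longrightarrow>
            columns (N + (r - 1) * (l + 1))
              (map (\<lambda>y. take (k - 1) y @ concat (replicate r (drop (k - 1) (take (k + l) y)))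
                          @ drop (k + l) y) wp)
            \<in> padded_lang L) \<and>
         (\<forall>y\<in>set wp. (\<forall>j\<in>{k - 1..<k + l}. y ! j \<noteq> None) \<or>
                     (\<forall>j\<in>{k - 1..<k + l}. y ! j = None))))"
proof -
  define S where "S = padded_alphabet A n"
  have "dfa_accepted S (padded_lang L)" using assms(4) unfolding regular_ntape_def S_def .
  then obtain Q :: "nat set" and q0 :: nat and \<delta> :: "nat \<Rightarrow> 'a option list \<Rightarrow> nat" and F where Qf: "finite Q" and q0: "q0 \<in> Q"
    and dQ: "\<forall>q\<in>Q. \<forall>\<sigma>\<in>S. \<delta> q \<sigma> \<in> Q" and FQ: "F \<subseteq> Q"
    and K: "padded_lang L = {x. set x \<subseteq> S \<and> fold (\<lambda>\<sigma> q. \<delta> q \<sigma>) x q0 \<in> F}"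
    by (rule dfa_obtain)
  define D where "D = (\<lambda>\<sigma> q. \<delta> q \<sigma>)"
  define p where "p = (n + 1) * card Q"
  have cQ: "card Q > 0" using Qf q0 card_gt_0_iff by auto
  show ?thesis
  proof (rule exI[of _ p], intro conjI ballI impI)
    show "p > 0" using cQ by (simp add: p_def)
    fix ws assume ws: "ws \<in> L" and Np: "p \<le> maxlen ws"
    define N where "N = maxlen ws"
    define wp where "wp = map (pad_word N) ws"
    have lenws: "length ws = n" using assms(3) ws by auto
    have lw: "\<forall>w\<in>set ws. length w \<le> N" unfolding N_def maxlen_def by (auto intro: Max_ge)
    have lwp: "\<forall>y\<in>set wp. length y = N" using lw by (auto simp: wp_def pad_word_def)
    define x where "x = columns N wp"
    have xL: "x \<in> padded_lang L" using ws
      unfolding x_def wp_def N_def padded_lang_def padded_string_def by auto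
    hence xS: "set x \<subseteq> S" and xF: "fold D x q0 \<in> F" using K by (auto simp: D_def)
    have lx: "length x = N" by (simp add: x_def columns_def)
    define s where "s = (\<lambda>t. fold D (take t x) q0)"
    have sQ: "s t \<in> Q" for t
    proof -
      have "set (take t x) \<subseteq> S" using xS set_take_subset by (rule order_trans[rotated])
      then show ?thesis unfolding s_def D_def using q0 by (rule foldQ[OF dQ])
    qed
    define B where "B = set (map length ws)"
    have cB: "card B \<le> n" unfolding B_def using card_length[of "map length ws"] lenws by simp
    have "(card B + 1) * card Q \<le> p" unfolding p_def using cB by (intro mult_le_mono1) simp
    then have "0 + (card B + 1) * card Q \<le> N" using Np unfolding N_def by simp
    then obtain a where a: "a + card Q \<le> N" "\<forall>b\<in>B. \<not> (a < b \<and> b < a + card Q)"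
      using gap[of B 0 "card Q" N] by (auto simp: B_def)
    have "\<not> inj_on s {a..a + card Q}"
    proof
      assume "inj_on s {a..a + card Q}"
      then have "card (s ` {a..a + card Q}) = card Q + 1" by (simp add: card_image)
      moreover have "card (s ` {a..a + card Q}) \<le> card Q"
        by (rule card_mono[OF Qf]) (use sQ in blast)
      ultimately show False by simp
    qed
    then obtain i0 j0 where ij0: "i0 \<in> {a..a + card Q}" "j0 \<in> {a..a + card Q}" "i0 \<noteq> j0" "s i0 = s j0"
      unfolding inj_on_def by blast
    obtain i j where ij: "a \<le> i" "i < j" "j \<le> a + card Q" "s i = s j"
    proof (cases "i0 < j0")
      case True then show ?thesis using that ij0 by auto
    next
      case False then show ?thesis using that[of i0 j0] that[of j0 i0] ij0 by auto
    qed
    have jN: "j \<le> N" using ij a by simp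
    have e1: "i + 1 - 1 = i" "i + 1 + (j - i - 1) = j" "j - i - 1 + 1 = j - i" using ij by auto
    have pump: "\<forall>r::nat. r \<ge> 1 \<longrightarrow>
            columns (N + (r - 1) * (j - i))
              (map (\<lambda>y. take i y @ concat (replicate r (drop i (take j y))) @ drop j y) wp)
            \<in> padded_lang L"
    proof (intro allI impI)
      fix r :: nat assume r: "r \<ge> 1"
      define x' where "x' = take i x @ concat (replicate r (drop i (take j x))) @ drop j x"
      have "set x' \<subseteq> set x" unfolding x'_def
        by (auto dest!: in_set_takeD in_set_dropD)
      hence s1: "set x' \<subseteq> S" using xS by blast
      have tj: "take j x = take i x @ drop i (take j x)" using ij
        by (metis append_take_drop_id min.strict_order_iff take_take)
      have m: "fold D (drop i (take j x)) (s i) = s j"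
        unfolding s_def by (subst (2) tj) simp
      have "fold D x' q0 = fold D (drop j x) (s j)"
        unfolding x'_def using fold_rep[of D "drop i (take j x)" "s i" r] m ij(4)
        by (simp add: s_def)
      also have "\<dots> = fold D x q0" unfolding s_def
        by (metis append_take_drop_id comp_apply fold_append)
      finally have "x' \<in> padded_lang L" using s1 xF K by (simp add: D_def)
      moreover have "columns (N + (r - 1) * (j - i))
              (map (\<lambda>y. take i y @ concat (replicate r (drop i (take j y))) @ drop j y) wp) = x'"
        using columns_pump[OF lwp ij(2) jN r] unfolding x'_def x_def Let_def by simp
      ultimately show "columns (N + (r - 1) * (j - i))
              (map (\<lambda>y. take i y @ concat (replicate r (drop i (take j y))) @ drop j y) wp)
            \<in> padded_lang L" by simp
    qed
    have unif: "\<forall>y\<in>set wp. (\<forall>u\<in>{i..<j}. y ! u \<noteq> None) \<or> (\<forall>u\<in>{i..<j}. y ! u = None)"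
    proof
      fix y assume "y \<in> set wp"
      then obtain w where w: "w \<in> set ws" "y = pad_word N w" unfolding wp_def by auto
      have "length w \<in> B" using w unfolding B_def by auto
      hence t: "length w \<le> a \<or> a + card Q \<le> length w" using a by fastforce
      have lwN: "length w \<le> N" using lw w by auto
      have pn: "\<And>u. u < N \<Longrightarrow> y ! u = (if u < length w then Some (w ! u) else None)"
        using pad_nth[of _ N w] lwN w(2) by simp
      show "(\<forall>u\<in>{i..<j}. y ! u \<noteq> None) \<or> (\<forall>u\<in>{i..<j}. y ! u = None)"
        using t
      proof
        assume "length w \<le> a"
        then show ?thesis using ij jN pn by (intro disjI2 ballI) auto
      next
        assume "a + card Q \<le> length w"
        then show ?thesis using ij jN pn by (intro disjI1 ballI) auto
      qed
    qed
    show "let N = maxlen ws; wp = map (pad_word N) ws in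
       \<exists>k l::nat. k \<ge> 1 \<and> k + l \<le> N \<and>
         (\<forall>r::nat. r \<ge> 1 \<longrightarrow>
            columns (N + (r - 1) * (l + 1))
              (map (\<lambda>y. take (k - 1) y @ concat (replicate r (drop (k - 1) (take (k + l) y)))
                          @ drop (k + l) y) wp)
            \<in> padded_lang L) \<and>
         (\<forall>y\<in>set wp. (\<forall>j\<in>{k - 1..<k + l}. y ! j \<noteq> None) \<or>
                     (\<forall>j\<in>{k - 1..<k + l}. y ! j = None))"
      unfolding Let_def N_def[symmetric] wp_def[symmetric]
      apply (rule exI[of _ "i + 1"], rule exI[of _ "j - i - 1"])
      unfolding e1 using pump unif jN by simp
  qed
qed

end
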